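(* Let $U$ be a countably infinite universe and $\mathcal{C}=(L_1,L_2,\ldots)$ a countably infinite collection of languages over $U$, and let $m^\star(L_j)$ be the values computed by the Procedure described in the context. Suppose that for every $t\in\mathbb{N}$, the set $\{j: m^\star(L_j)+1\le t\}$ is finite. Then there exists an algorithm that non-uniformly generates from $\mathcal{C}$ with generation times forming a Pareto-optimal sequence.
   Context: A language is an infinite subset of $U$. A collection is a sequence of languages; repetitions are allowed and entries are distinguished by their index. An enumeration of a language $L$ is a sequence $x_1,x_2,\ldots$ with every $x_t\in L$ and every $x\in L$ equal to some $x_t$. A generating algorithm at each time $t\ge1$ receives $x_1,\ldots,x_t$ and outputs $z_t\in U$; $S_t$ is the set of distinct strings among $x_1,\ldots,x_t$. An algorithm non-uniformly generates from $\mathcal{C}$ with (finite) generation times $t(L_i)$ if for every $i$ and every enumeration of $L_i$, $z_t\in L_i\setminus S_t$ whenever $|S_t|\ge t(L_i)$. For an algorithm $\mathcal{G}$, $t_{\mathcal{G}}(L_i)$ denotes the least such value for $L_i$ ($\infty$ if none). A sequence $t(L_1),t(L_2),\ldots$ is Pareto-optimal if every algorithm $\mathcal{G}$ that non-uniformly generates from $\mathcal{C}$ and satisfies $t_{\mathcal{G}}(L_i)<t(L_i)$ for some $i$ also satisfies $t_{\mathcal{G}}(L_j)>t(L_j)$ for some other $j$. Procedure. Set $\mathcal{C}'_0=()$. For $i=1,2,3,\ldots$: append the entry $L_i$ at the end of $\mathcal{C}'_{i-1}$ to get $\mathcal{C}'_i=(L'_1,\ldots,L'_i)$, and set $j=i$.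 Repeat: (1) among all subcollections $\mathcal{D}$ of the entries $(L'_1,\ldots,L'_j)$ that include the entry $L'_j$ and satisfy $|\bigcap_{L\in\mathcal{D}}L|<\infty$, let $m_{\mathrm{chk}}$ be the maximum of $|\bigcap_{L\in\mathcal{D}}L|$ and $\mathcal{C}_{\mathrm{chk}}$ a maximizer; if no such $\mathcal{D}$ exists, set $\mathcal{C}_{\mathrm{chk}}=()$, $m_{\mathrm{chk}}=0$. (2) If $j\le1$ or $m_{\mathrm{chk}}>m^\star(L'_{j-1})$ (already fixed since $L'_{j-1}$ has original index $<i$), stop the loop. (3) Otherwise swap positions $j-1$ and $j$ in $\mathcal{C}'_i$, set $j\leftarrow j-1$ and return to (1). When the loop stops, set $\mathcal{C}(L_i)=\mathcal{C}_{\mathrm{chk}}$ and $m^\star(L_i)=m_{\mathrm{chk}}$. *)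

theory Defs
  imports Main "HOL-Library.Countable_Set" "HOL-Library.Extended_Nat"
begin

(* Indices are 0-based: the collection is L 0, L 1, ...; an enumeration is x 0, x 1, ...;
   at time t >= 1 the algorithm sees the prefix [x 0, ..., x (t-1)]. *)

type_synonym 'u algorithm = "'u list \<Rightarrow> 'u"

definition enumerates :: "(nat \<Rightarrow> 'u) \<Rightarrow> 'u set \<Rightarrow> bool" where
  "enumerates x K \<longleftrightarrow> range x = K"

definition seen :: "(nat \<Rightarrow> 'u) \<Rightarrow> nat \<Rightarrow> 'u set" where
  "seen x t = x ` {..<t}"

definition gen_good :: "'u algorithm \<Rightarrow> 'u set \<Rightarrow> nat \<Rightarrow> bool" where
  "gen_good G K n \<longleftrightarrow>
     (\<forall>x. enumerates x K \<longrightarrow>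
        (\<forall>t\<ge>1. n \<le> card (seen x t) \<longrightarrow> G (map x [0..<t]) \<in> K - seen x t))"

definition nonunif_generates_with :: "'u algorithm \<Rightarrow> (nat \<Rightarrow> 'u set) \<Rightarrow> (nat \<Rightarrow> nat) \<Rightarrow> bool" where
  "nonunif_generates_with G L T \<longleftrightarrow> (\<forall>i. gen_good G (L i) (T i))"

definition nonunif_generates :: "'u algorithm \<Rightarrow> (nat \<Rightarrow> 'u set) \<Rightarrow> bool" where
  "nonunif_generates G L \<longleftrightarrow> (\<exists>T. nonunif_generates_with G L T)"

definition gen_time :: "'u algorithm \<Rightarrow> (nat \<Rightarrow> 'u set) \<Rightarrow> nat \<Rightarrow> enat" where
  "gen_time G L i = (if \<exists>n. gen_good G (L i) n then enat (LEAST n. gen_good G (L i) n) else \<infinity>)"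

definition pareto_optimal :: "(nat \<Rightarrow> 'u set) \<Rightarrow> (nat \<Rightarrow> nat) \<Rightarrow> bool" where
  "pareto_optimal L T \<longleftrightarrow>
     (\<forall>G::'u algorithm. nonunif_generates G L \<longrightarrow>
        (\<forall>i. gen_time G L i < enat (T i) \<longrightarrow> (\<exists>j. j \<noteq> i \<and> gen_time G L j > enat (T j))))"

(* m_chk for the entry at 0-based position p of the current ordering ord (list of original
   indices): max of |intersection of D| over finite-intersection subcollections D of the entries at
   positions 0..p that contain the entry at position p; 0 if there is none. *)
definition mchk :: "(nat \<Rightarrow> 'u set) \<Rightarrow> nat list \<Rightarrow> nat \<Rightarrow> nat" where
  "mchk L ord p = Max (insert 0
     {card (\<Inter>k\<in>D. L k) | D. D \<subseteq> set (take (Suc p) ord) \<and> ord ! p \<in> D \<and> finite (\<Inter>k\<in>D. L k)})"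

definition swap_adj :: "nat list \<Rightarrow> nat \<Rightarrow> nat list" where
  "swap_adj ord p = ord[p := ord ! Suc p, Suc p := ord ! p]"

fun ins_loop :: "(nat \<Rightarrow> 'u set) \<Rightarrow> (nat \<Rightarrow> nat) \<Rightarrow> nat list \<Rightarrow> nat \<Rightarrow> nat list \<times> nat" where
  "ins_loop L ms ord 0 = (ord, mchk L ord 0)"
| "ins_loop L ms ord (Suc p) =
     (let m = mchk L ord (Suc p) in
      if m > ms (ord ! p) then (ord, m) else ins_loop L ms (swap_adj ord p) p)"

(* state after processing indices 0..i-1: (ordering C'_i, m* values of processed indices) *)
fun proc :: "(nat \<Rightarrow> 'u set) \<Rightarrow> nat \<Rightarrow> nat list \<times> (nat \<Rightarrow> nat)" where
  "proc L 0 = ([], (\<lambda>_. 0))"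
| "proc L (Suc i) =
     (let (ord, ms) = proc L i;
          (ord', m) = ins_loop L ms (ord @ [i]) (length ord)
      in (ord', ms(i := m)))"

definition mstar :: "(nat \<Rightarrow> 'u set) \<Rightarrow> nat \<Rightarrow> nat" where
  "mstar L i = snd (proc L (Suc i)) i"

end

theory Submission
  imports Defs
begin

lemma swap_adj_app: "swap_adj (xs @ a # b # ys) (length xs) = xs @ b # a # ys"
  by (simp add: swap_adj_def list_update_append nth_append)

lemma mchk_set_finite:
  "finite {card (\<Inter>k\<in>D. L k) | D. D \<subseteq> set (take (Suc p) ord) \<and> ord ! p \<in> D \<and> finite (\<Inter>k\<in>D. L k)}"
proof -
  have "{card (\<Inter>k\<in>D. L k) | D. D \<subseteq> set (take (Suc p) ord) \<and> ord ! p \<in> D \<and> finite (\<Inter>k\<in>D. L k)}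
     \<subseteq> (\<lambda>D. card (\<Inter>k\<in>D. L k)) ` Pow (set (take (Suc p) ord))" by auto
  then show ?thesis by (rule finite_subset) simp
qed

lemma mchk_ge:
  assumes "D \<subseteq> set (take (Suc p) ord)" "ord ! p \<in> D" "finite (\<Inter>k\<in>D. L k)"
  shows "card (\<Inter>k\<in>D. L k) \<le> mchk L ord p"
  unfolding mchk_def
  by (rule Max_ge) (simp add: mchk_set_finite, use assms in blast)

lemma mchk_mono:
  assumes "set (take (Suc p) o1) \<subseteq> set (take (Suc q) o2)" "o1 ! p = o2 ! q"
  shows "mchk L o1 p \<le> mchk L o2 q"
  unfolding mchk_def
  by (rule Max_mono) (use assms in \<open>auto simp: mchk_set_finite\<close>)

lemma mchk_attained:
  assumes "mchk L ord p \<noteq> 0"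
  shows "\<exists>D. D \<subseteq> set (take (Suc p) ord) \<and> ord ! p \<in> D \<and> finite (\<Inter>k\<in>D. L k)
           \<and> card (\<Inter>k\<in>D. L k) = mchk L ord p"
proof -
  let ?S = "{card (\<Inter>k\<in>D. L k) | D. D \<subseteq> set (take (Suc p) ord) \<and> ord ! p \<in> D \<and> finite (\<Inter>k\<in>D. L k)}"
  have "Max (insert 0 ?S) \<in> insert 0 ?S" by (rule Max_in) (simp_all add: mchk_set_finite)
  then have "mchk L ord p \<in> ?S" using assms unfolding mchk_def by auto
  then obtain D where D: "mchk L ord p = card (\<Inter>k\<in>D. L k)" "D \<subseteq> set (take (Suc p) ord)"
     "ord ! p \<in> D" "finite (\<Inter>k\<in>D. L k)" by blast
  show ?thesis by (rule exI[of _ D]) (use D in simp)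
qed

lemma loop_unfold:
  "ins_loop L ms (A0 @ a # k # B) (Suc (length A0)) =
    (if mchk L (A0 @ a # k # B) (Suc (length A0)) > ms a then (A0 @ a # k # B, mchk L (A0 @ a # k # B) (Suc (length A0)))
     else ins_loop L ms (A0 @ k # a # B) (length A0))"
  by (simp add: Let_def nth_append swap_adj_app)

lemma loop_sorted:
  assumes "ins_loop L ms (A @ k # B) (length A) = (ord', m)"
    and "sorted (map ms (A @ B))"
    and "\<forall>b\<in>set B. mchk L (A @ k # B) (length A) \<le> ms b"
  shows "\<exists>A' B'. ord' = A' @ k # B' \<and> A' @ B' = A @ B \<and> (\<forall>a\<in>set A'. ms a \<le> m) \<and> (\<forall>b\<in>set B'. m \<le> ms b)"
  using assms
proof (induction A arbitrary: B ord' m rule: rev_induct)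
  case Nil
  then show ?case by (intro exI[of _ "[]"] exI[of _ B]) auto
next
  case (snoc a A0)
  let ?o = "A0 @ a # k # B"
  define m0 where "m0 = mchk L ?o (Suc (length A0))"
  have loop: "ins_loop L ms ?o (Suc (length A0)) = (if m0 > ms a then (?o, m0) else ins_loop L ms (A0 @ k # a # B) (length A0))"
    unfolding m0_def by (rule loop_unfold)
  have pr1: "ins_loop L ms ?o (Suc (length A0)) = (ord', m)" using snoc.prems(1) by simp
  have srt: "sorted (map ms (A0 @ a # B))" using snoc.prems(2) by simp
  have Bm0: "\<forall>b\<in>set B. m0 \<le> ms b" using snoc.prems(3) by (simp add: m0_def)
  show ?case
  proof (cases "m0 > ms a")
    case True
    then have e: "ord' = ?o" "m = m0" using pr1 loop by auto
    have "\<forall>x\<in>set A0. ms x \<le> ms a" using srt by (simp add: sorted_append)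
    then show ?thesis using e True Bm0
      by (intro exI[of _ "A0 @ [a]"] exI[of _ B]) auto
  next
    case False
    have rec: "ins_loop L ms (A0 @ k # a # B) (length A0) = (ord', m)" using pr1 loop False by simp
    have mm: "mchk L (A0 @ k # a # B) (length A0) \<le> m0"
      unfolding m0_def by (rule mchk_mono) (auto simp: nth_append)
    have "\<forall>b\<in>set (a # B). mchk L (A0 @ k # a # B) (length A0) \<le> ms b"
      using mm Bm0 False by auto
    from snoc.IH[OF rec _ this] srt
    obtain A' B' where "ord' = A' @ k # B'" "A' @ B' = A0 @ a # B" "\<forall>a\<in>set A'. ms a \<le> m" "\<forall>b\<in>set B'. m \<le> ms b"
      by auto
    then show ?thesis by auto
  qed
qed

lemma loop_bound:
  assumes "ins_loop L ms (A @ k # B) (length A) = (ord', m)"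
    and "D \<subseteq> insert k (set A)" "k \<in> D" "finite (\<Inter>j\<in>D. L j)" "infinite (L k)"
  shows "card (\<Inter>j\<in>D. L j) \<le> m \<or> (\<exists>j\<in>D \<inter> set A. card (\<Inter>j\<in>D. L j) \<le> ms j)"
  using assms
proof (induction A arbitrary: B ord' m D rule: rev_induct)
  case Nil
  then have "D = {k}" by auto
  then show ?case using Nil by auto
next
  case (snoc a A0)
  let ?o = "A0 @ a # k # B"
  define m0 where "m0 = mchk L ?o (Suc (length A0))"
  have loop: "ins_loop L ms ?o (Suc (length A0)) = (if m0 > ms a then (?o, m0) else ins_loop L ms (A0 @ k # a # B) (length A0))"
    unfolding m0_def by (rule loop_unfold)
  have pr1: "ins_loop L ms ?o (Suc (length A0)) = (ord', m)" using snoc.prems(1) by simp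
  have ge: "card (\<Inter>j\<in>D. L j) \<le> m0"
    unfolding m0_def by (rule mchk_ge) (use snoc.prems in \<open>auto simp: nth_append\<close>)
  show ?case
  proof (cases "m0 > ms a")
    case True
    then show ?thesis using pr1 loop ge by auto
  next
    case False
    show ?thesis
    proof (cases "a \<in> D")
      case True
      then show ?thesis using False ge by auto
    next
      case aD: False
      have rec: "ins_loop L ms (A0 @ k # a # B) (length A0) = (ord', m)" using pr1 loop False by simp
      have "D \<subseteq> insert k (set A0)" using snoc.prems(2) aD by auto
      from snoc.IH[OF rec this snoc.prems(3,4,5)] show ?thesis by auto
    qed
  qed
qed

lemma loop_witness:
  assumes "ins_loop L ms (A @ k # B) (length A) = (ord', m)"
    and "sorted (map ms A)" "infinite (L k)" "m \<noteq> 0"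
  shows "\<exists>D. k \<in> D \<and> D \<subseteq> insert k (set A \<union> set B) \<and> finite (\<Inter>j\<in>D. L j)
           \<and> card (\<Inter>j\<in>D. L j) = m \<and> (\<forall>j\<in>D-{k}. ms j < m)"
  using assms
proof (induction A arbitrary: B ord' m rule: rev_induct)
  case Nil
  then have "mchk L (k # B) 0 \<noteq> 0" by auto
  from mchk_attained[OF this] obtain D where "D \<subseteq> {k}" "k \<in> D" "finite (\<Inter>j\<in>D. L j)" by auto
  then have "D = {k}" by auto
  then show ?case using Nil \<open>finite (\<Inter>j\<in>D. L j)\<close> by auto
next
  case (snoc a A0)
  let ?o = "A0 @ a # k # B"
  define m0 where "m0 = mchk L ?o (Suc (length A0))"
  have loop: "ins_loop L ms ?o (Suc (length A0)) = (if m0 > ms a then (?o, m0) else ins_loop L ms (A0 @ k # a # B) (length A0))"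
    unfolding m0_def by (rule loop_unfold)
  have pr1: "ins_loop L ms ?o (Suc (length A0)) = (ord', m)" using snoc.prems(1) by simp
  have srt: "\<forall>x\<in>set A0. ms x \<le> ms a" "sorted (map ms A0)" using snoc.prems(2) by (simp_all add: sorted_append)
  show ?case
  proof (cases "m0 > ms a")
    case True
    then have e: "m = m0" using pr1 loop by auto
    then have "m0 \<noteq> 0" using snoc.prems(4) by simp
    from mchk_attained[OF this[unfolded m0_def]] obtain D where
      D: "D \<subseteq> set (A0 @ [a, k])" "k \<in> D" "finite (\<Inter>j\<in>D. L j)" "card (\<Inter>j\<in>D. L j) = m0"
      by (auto simp: nth_append m0_def)
    have "\<forall>j\<in>D-{k}. ms j < m" using D(1) srt(1) True e by fastforce
    moreover have "D \<subseteq> insert k (set (A0 @ [a]) \<union> set B)" using D(1) by auto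
    ultimately show ?thesis using D e by blast
  next
    case False
    have rec: "ins_loop L ms (A0 @ k # a # B) (length A0) = (ord', m)" using pr1 loop False by simp
    from snoc.IH[OF rec srt(2) snoc.prems(3,4)] show ?thesis by auto
  qed
qed


lemma proc_Suc:
  assumes "proc L i = (ord, ms)" "ins_loop L ms (ord @ [i]) (length ord) = (ord', m)"
  shows "proc L (Suc i) = (ord', ms(i := m))"
  using assms by simp

lemma sorted_insert_mid:
  assumes "sorted (map f (A @ B))" "\<forall>a\<in>set A. f a \<le> m" "\<forall>b\<in>set B. m \<le> f b"
  shows "sorted (map f A @ m # map f B)"
  using assms by (auto simp: sorted_append)

lemma proc_inv:
  "set (fst (proc L i)) = {..<i} \<and> sorted (map (snd (proc L i)) (fst (proc L i)))"
proof (induction i)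
  case 0
  then show ?case by simp
next
  case (Suc i)
  obtain ord ms where P: "proc L i = (ord, ms)" by fastforce
  obtain ord' m where Q: "ins_loop L ms (ord @ [i]) (length ord) = (ord', m)" by fastforce
  have R: "proc L (Suc i) = (ord', ms(i := m))" by (rule proc_Suc[OF P Q])
  have IH: "set ord = {..<i}" "sorted (map ms ord)" using Suc P by auto
  have "\<exists>A' B'. ord' = A' @ i # B' \<and> A' @ B' = ord @ [] \<and> (\<forall>a\<in>set A'. ms a \<le> m) \<and> (\<forall>b\<in>set B'. m \<le> ms b)"
    by (rule loop_sorted) (use Q IH in simp_all)
  then obtain A' B' where AB0: "ord' = A' @ i # B'" "A' @ B' = ord @ []" "\<forall>a\<in>set A'. ms a \<le> m" "\<forall>b\<in>set B'. m \<le> ms b"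
    by blast
  have AB: "ord' = A' @ i # B'" "A' @ B' = ord" "\<forall>a\<in>set A'. ms a \<le> m" "\<forall>b\<in>set B'. m \<le> ms b"
    using AB0 by simp_all
  have un: "set A' \<union> set B' = {..<i}" using AB(2) IH(1) by (metis set_append)
  have notin: "i \<notin> set A'" "i \<notin> set B'" using un by blast+
  have e1: "map (ms(i := m)) A' = map ms A'" "map (ms(i := m)) B' = map ms B'"
    using notin by (simp_all add: map_fun_upd)
  have s0: "sorted (map ms (A' @ B'))" using AB(2) IH(2) by simp
  have "sorted (map ms A' @ m # map ms B')"
    by (rule sorted_insert_mid[OF s0 AB(3) AB(4)])
  then have "sorted (map (ms(i := m)) ord')"
    unfolding AB(1) map_append list.map e1 fun_upd_same .
  moreover have "set ord' = {..<Suc i}" using AB(1) un lessThan_Suc by auto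
  ultimately show ?case unfolding R fst_conv snd_conv by blast
qed

lemma proc_mstar: "j < i \<Longrightarrow> snd (proc L i) j = mstar L j"
proof (induction i)
  case 0
  then show ?case by simp
next
  case (Suc i)
  obtain ord ms where P: "proc L i = (ord, ms)" by fastforce
  obtain ord' m where Q: "ins_loop L ms (ord @ [i]) (length ord) = (ord', m)" by fastforce
  have R: "proc L (Suc i) = (ord', ms(i := m))" by (rule proc_Suc[OF P Q])
  show ?case
  proof (cases "j = i")
    case True
    then show ?thesis by (simp add: mstar_def)
  next
    case False
    then have "j < i" using Suc.prems by simp
    then show ?thesis using Suc.IH R P False by simp
  qed
qed

lemma mstar_loop:
  assumes "proc L k = (ord, ms)" "ins_loop L ms (ord @ [k]) (length ord) = (ord', m)"
  shows "mstar L k = m"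
  using proc_Suc[OF assms] by (simp add: mstar_def)

lemma mstar_bound:
  assumes inf: "\<And>i. infinite (L i)" and D: "finite D" "D \<noteq> {}" "finite (\<Inter>j\<in>D. L j)"
  shows "\<exists>j\<in>D. card (\<Inter>j\<in>D. L j) \<le> mstar L j"
proof -
  define k where "k = Max D"
  have kD: "k \<in> D" using D k_def by simp
  have kmax: "\<forall>j\<in>D. j \<le> k" using D k_def by simp
  obtain ord ms where P: "proc L k = (ord, ms)" by fastforce
  obtain ord' m where Q: "ins_loop L ms (ord @ [k]) (length ord) = (ord', m)" by fastforce
  have so: "set ord = {..<k}" using proc_inv[of L k] P by simp
  have mk: "mstar L k = m" by (rule mstar_loop[OF P Q])
  have sub: "D \<subseteq> insert k (set ord)" using kmax so by force
  have "card (\<Inter>j\<in>D. L j) \<le> m \<or> (\<exists>j\<in>D \<inter> set ord. card (\<Inter>j\<in>D. L j) \<le> ms j)"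
    by (rule loop_bound[of L ms ord k "[]" ord' m D]) (use Q sub kD D inf in simp_all)
  then show ?thesis
  proof
    assume "card (\<Inter>j\<in>D. L j) \<le> m" then show ?thesis using kD mk by auto
  next
    assume "\<exists>j\<in>D \<inter> set ord. card (\<Inter>j\<in>D. L j) \<le> ms j"
    then obtain j where j: "j \<in> D" "j \<in> set ord" "card (\<Inter>j\<in>D. L j) \<le> ms j" by auto
    have "ms j = mstar L j" using proc_mstar[of j k L] j(2) so P by auto
    then show ?thesis using j by auto
  qed
qed

lemma mstar_witness:
  assumes inf: "\<And>i. infinite (L i)" and nz: "mstar L i \<noteq> 0"
  shows "\<exists>D. i \<in> D \<and> finite D \<and> finite (\<Inter>j\<in>D. L j) \<and> card (\<Inter>j\<in>D. L j) = mstar L i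
            \<and> (\<forall>j\<in>D-{i}. mstar L j < mstar L i)"
proof -
  obtain ord ms where P: "proc L i = (ord, ms)" by fastforce
  obtain ord' m where Q: "ins_loop L ms (ord @ [i]) (length ord) = (ord', m)" by fastforce
  have so: "set ord = {..<i}" "sorted (map ms ord)" using proc_inv[of L i] P by auto
  have mk: "mstar L i = m" by (rule mstar_loop[OF P Q])
  have "\<exists>D. i \<in> D \<and> D \<subseteq> insert i (set ord \<union> set []) \<and> finite (\<Inter>j\<in>D. L j)
     \<and> card (\<Inter>j\<in>D. L j) = m \<and> (\<forall>j\<in>D-{i}. ms j < m)"
    by (rule loop_witness) (use Q so inf nz mk in simp_all)
  then obtain D where D: "i \<in> D" "D \<subseteq> insert i (set ord \<union> set [])" "finite (\<Inter>j\<in>D. L j)"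
     "card (\<Inter>j\<in>D. L j) = m" "\<forall>j\<in>D-{i}. ms j < m"
    by blast
  have fD: "finite D" using D(2) by (rule finite_subset) simp
  have "\<forall>j\<in>D-{i}. mstar L j < m"
  proof
    fix j assume j: "j \<in> D - {i}"
    then have "j < i" using D(2) so(1) by auto
    then have "ms j = mstar L j" using proc_mstar[of j i L] P by simp
    then show "mstar L j < m" using D(5) j by force
  qed
  then show ?thesis using D fD mk by auto
qed

lemma enum_prefix:
  assumes "countable K" "infinite K" "set w \<subseteq> K"
  shows "\<exists>x. enumerates x K \<and> map x [0..<length w] = w"
proof -
  define x where "x n = (if n < length w then w ! n else from_nat_into K (n - length w))" for n
  have ne: "K \<noteq> {}" using assms(2) by auto
  have "range x \<subseteq> K"
  proof
    fix y assume "y \<in> range x"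
    then obtain n where "y = x n" by auto
    then show "y \<in> K" using assms(3) from_nat_into[OF ne] nth_mem by (auto simp: x_def)
  qed
  moreover have "K \<subseteq> range x"
  proof
    fix y assume y: "y \<in> K"
    have "x (length w + to_nat_on K y) = y"
      using from_nat_into_to_nat_on[OF assms(1) y] by (simp add: x_def)
    then show "y \<in> range x" by (metis rangeI)
  qed
  ultimately have "enumerates x K" by (auto simp: enumerates_def)
  moreover have "map x [0..<length w] = w"
    by (rule nth_equalityI) (auto simp: x_def)
  ultimately show ?thesis by blast
qed


theorem mainTheorem3:
  fixes L :: "nat \<Rightarrow> 'u set"
  assumes "countable (UNIV :: 'u set)" and "infinite (UNIV :: 'u set)"
    and "\<And>i. infinite (L i)"
    and "\<And>t::nat. finite {j. mstar L j + 1 \<le> t}"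
  shows "\<exists>(G::'u algorithm) T. nonunif_generates_with G L T \<and> pareto_optimal L T"
proof -
  define T where "T i = (if mstar L i = 0 then 0 else mstar L i + 1)" for i
  define G :: "'u algorithm" where
    "G xs = (SOME z. z \<in> (\<Inter>j\<in>{j. mstar L j < card (set xs) \<and> set xs \<subseteq> L j}. L j) - set xs)" for xs
  have gen: "nonunif_generates_with G L T"
    unfolding nonunif_generates_with_def gen_good_def
  proof (intro allI impI)
    fix i x t assume enum: "enumerates x (L i)" and t: "1 \<le> t" and le: "T i \<le> card (seen x t)"
    define S where "S = seen x t"
    have Sx: "set (map x [0..<t]) = S" by (auto simp: S_def seen_def)
    have finS: "finite S" by (simp add: S_def seen_def)
    have "x 0 \<in> S" using t by (auto simp: S_def seen_def)
    then have "S \<noteq> {}" by blast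
    then have cS: "card S > 0" using finS by (simp add: card_gt_0_iff)
    have SL: "S \<subseteq> L i" using enum by (auto simp: S_def seen_def enumerates_def)
    have lt: "mstar L i < card S" using le cS by (auto simp: T_def S_def split: if_splits)
    define C where "C = {j. mstar L j < card S \<and> S \<subseteq> L j}"
    have iC: "i \<in> C" using lt SL by (simp add: C_def)
    have finC: "finite C"
      by (rule finite_subset[OF _ assms(4)[of "card S"]]) (auto simp: C_def)
    have SC: "S \<subseteq> (\<Inter>j\<in>C. L j)" by (auto simp: C_def)
    have inf: "infinite (\<Inter>j\<in>C. L j)"
    proof
      assume fin: "finite (\<Inter>j\<in>C. L j)"
      have "C \<noteq> {}" using iC by blast
      from mstar_bound[OF assms(3) finC this fin]
      obtain j where j: "j \<in> C" "card (\<Inter>j\<in>C. L j) \<le> mstar L j" by blast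
      moreover have "card S \<le> card (\<Inter>j\<in>C. L j)" using card_mono[OF fin SC] .
      moreover have "mstar L j < card S" using j(1) unfolding C_def by blast
      ultimately show False by linarith
    qed
    then have "infinite ((\<Inter>j\<in>C. L j) - S)" using finS by (rule Diff_infinite_finite[rotated])
    then have ex: "\<exists>z. z \<in> (\<Inter>j\<in>C. L j) - S" by (metis ex_in_conv finite.emptyI)
    have Geq: "G (map x [0..<t]) = (SOME z. z \<in> (\<Inter>j\<in>C. L j) - S)"
      by (simp only: G_def Sx C_def)
    have "G (map x [0..<t]) \<in> (\<Inter>j\<in>C. L j) - S" unfolding Geq by (rule someI_ex[OF ex])
    then show "G (map x [0..<t]) \<in> L i - seen x t" using iC S_def by auto
  qed
  have "pareto_optimal L T"
    unfolding pareto_optimal_def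
  proof (intro allI impI)
    fix G' :: "'u algorithm" and i
    assume ng: "nonunif_generates G' L" and lt: "gen_time G' L i < enat (T i)"
    from ng obtain T' where T': "\<And>i. gen_good G' (L i) (T' i)"
      unfolding nonunif_generates_def nonunif_generates_with_def by blast
    define g where "g j = (LEAST n. gen_good G' (L j) n)" for j
    have gt: "gen_time G' L j = enat (g j)" for j using T' by (auto simp: gen_time_def g_def)
    have gg: "gen_good G' (L j) (g j)" for j unfolding g_def using T' by (rule LeastI)
    define m where "m = mstar L i"
    have gi: "g i < T i" using lt gt by simp
    then have m0: "m \<noteq> 0" and gim: "g i \<le> m" by (auto simp: T_def m_def split: if_splits)
    have m0': "mstar L i \<noteq> 0" using m0 m_def by simp
    from mstar_witness[OF assms(3) m0']
    obtain D where D0: "i \<in> D" "finite D" "finite (\<Inter>j\<in>D. L j)" "card (\<Inter>j\<in>D. L j) = mstar L i"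
        "\<forall>j\<in>D-{i}. mstar L j < mstar L i"
      by blast
    have D: "i \<in> D" "finite D" "finite (\<Inter>j\<in>D. L j)" "card (\<Inter>j\<in>D. L j) = m"
        "\<forall>j\<in>D-{i}. mstar L j < m"
      using D0 unfolding m_def by simp_all
    define E where "E = (\<Inter>j\<in>D. L j)"
    have fE: "finite E" using D(3) unfolding E_def .
    from finite_distinct_list[OF fE] obtain w where w: "set w = E" "distinct w" by blast
    have lw: "length w = m" using distinct_card[OF w(2)] w(1) D(4) E_def by simp
    have cnt: "countable K" for K :: "'u set" by (rule countable_subset[OF subset_UNIV assms(1)])
    have pref: "\<exists>x. enumerates x (L j) \<and> map x [0..<m] = w" if "j \<in> D" for j
    proof -
      have "set w \<subseteq> L j" using w(1) that E_def by auto
      from enum_prefix[OF cnt assms(3) this] show ?thesis unfolding lw .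
    qed
    have seen_w: "seen x m = E" if "map x [0..<m] = w" for x
    proof -
      have "seen x m = set (map x [0..<m])" by (auto simp: seen_def)
      then show ?thesis using that w(1) by simp
    qed
    have m1: "1 \<le> m" using m0 by simp
    have cE: "card E = m" using D(4) E_def by simp
    obtain x where x: "enumerates x (L i)" "map x [0..<m] = w" using pref D(1) by blast
    have "\<forall>t\<ge>1. g i \<le> card (seen x t) \<longrightarrow> G' (map x [0..<t]) \<in> L i - seen x t"
      using gg[of i] x(1) unfolding gen_good_def by blast
    moreover have "g i \<le> card (seen x m)" using gim seen_w[OF x(2)] cE by simp
    ultimately have "G' (map x [0..<m]) \<in> L i - seen x m" using m1 by blast
    then have Gw: "G' w \<in> L i - E" using x(2) seen_w[OF x(2)] by simp
    then obtain j where j: "j \<in> D" "G' w \<notin> L j" unfolding E_def by blast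
    have ji: "j \<noteq> i" using Gw j by blast
    obtain y where y: "enumerates y (L j)" "map y [0..<m] = w" using pref j(1) by blast
    have "\<not> g j \<le> m"
    proof
      assume "g j \<le> m"
      then have le: "g j \<le> card (seen y m)" using seen_w[OF y(2)] cE by simp
      have "\<forall>t\<ge>1. g j \<le> card (seen y t) \<longrightarrow> G' (map y [0..<t]) \<in> L j - seen y t"
        using gg[of j] y(1) unfolding gen_good_def by blast
      then have "G' (map y [0..<m]) \<in> L j - seen y m" using m1 le by blast
      then show False using y(2) j(2) by simp
    qed
    moreover have "mstar L j < m" using D(5) j(1) ji by blast
    then have "T j \<le> m" by (simp add: T_def)
    ultimately have "enat (T j) < gen_time G' L j" using gt by simp
    then show "\<exists>j. j \<noteq> i \<and> gen_time G' L j > enat (T j)" using ji by blast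
  qed
  then show ?thesis using gen by blast
qed

end
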